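(* Let $U\subseteq L_{\mathrm{up}}$ be a set of up-links such that the sets $P_u$, $u\in U$, are pairwise disjoint. Then the dependency graph of $U$ is a branching, i.e. it contains no directed cycle and every vertex has in-degree at most one.
   Context: Let $(G=(V,E),L,w)$ be a WTAP instance (spanning tree $G$, links $L\subseteq\binom V2$, weights $w>0$) with a fixed root $r\in V$, and let $F\subseteq L$ be a WTAP solution, i.e. $\bigcup_{\ell\in F}P_\ell=E$, where $P_\ell$ is the edge set of the tree path between the endpoints of $\ell$ and $V_\ell$ its vertex set. Ancestors of $v$ are the vertices on the $r$-$v$ path in $G$ (including $r$ and $v$); descendants are defined reciprocally. $\mathrm{apex}(\ell)$ is the vertex of $V_\ell$ closest to $r$. An up-link is a link $\{t,b\}$ with $t$ an ancestor of $b$; $L_{\mathrm{up}}$ is the set of up-links. For $v\in V$ let $B_v=\{\ell\in F\colon\mathrm{apex}(\ell)\text{ is a descendant of }v\}$. For an up-link $u=\{t,b\}$ with $t$ an ancestor of $b$, let $v_u$ be the ancestor of $t$ farthest from $r$ such that $P_u\subseteq\bigcup_{\ell\in B_{v_u}}P_\ell$, and fix $F_u\subseteq B_{v_u}$ inclusion-wise minimal with $P_u\subseteq\bigcup_{\ell\in F_u}P_\ell$. For $\ell\in F_u$ let $P_{u,\ell}=P_u\setminus\bigcup_{\bar\ell\in F_u\setminus\{\ell\}}P_{\bar\ell}$; these sets are nonempty, pairwise disjoint, and each is the edge set of a path. Define $\ell_1\prec_u\ell_2$ iff the edges of $P_{u,\ell_1}$ appear before those of $P_{u,\ell_2}$ on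 the $t$-$b$ path in $G$. If $\ell_1\prec_u\cdots\prec_u\ell_q$ are the links of $F_u$, let $A_u=\{(\ell_i,\ell_{i+1})\colon i=1,\dots,q-1\}$. The dependency graph of a set $U\subseteq L_{\mathrm{up}}$ is the directed graph with vertex set $F$ whose arc set is the disjoint union of the sets $A_u$, $u\in U$. *)

theory Defs
  imports Complex_Main
begin

text \<open>Trees are given by a vertex set V and a set E of 2-element edges; a tree is
  a finite nonempty graph in which any two vertices are joined by exactly one
  simple path (= connected and acyclic).\<close>

definition is_spath :: "'a set set \<Rightarrow> 'a list \<Rightarrow> bool" where
  "is_spath E xs \<longleftrightarrow> xs \<noteq> [] \<and> distinct xs \<and>
     (\<forall>i. Suc i < length xs \<longrightarrow> {xs ! i, xs ! Suc i} \<in> E)"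

definition is_tree :: "'a set \<Rightarrow> 'a set set \<Rightarrow> bool" where
  "is_tree V E \<longleftrightarrow> finite V \<and> V \<noteq> {} \<and>
     (\<forall>e\<in>E. \<exists>a b. a \<in> V \<and> b \<in> V \<and> a \<noteq> b \<and> e = {a, b}) \<and>
     (\<forall>a\<in>V. \<forall>b\<in>V. \<exists>!xs. is_spath E xs \<and> hd xs = a \<and> last xs = b)"

definition tpath :: "'a set set \<Rightarrow> 'a \<Rightarrow> 'a \<Rightarrow> 'a list" where
  "tpath E a b = (THE xs. is_spath E xs \<and> hd xs = a \<and> last xs = b)"

definition path_edges :: "'a list \<Rightarrow> 'a set set" where
  "path_edges xs = {{xs ! i, xs ! Suc i} | i. Suc i < length xs}"

definition lpath :: "'a set set \<Rightarrow> 'a set \<Rightarrow> 'a set set" where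
  "lpath E l = \<Union>{path_edges (tpath E a b) | a b. l = {a, b}}"

definition lverts :: "'a set set \<Rightarrow> 'a set \<Rightarrow> 'a set" where
  "lverts E l = \<Union>{set (tpath E a b) | a b. l = {a, b}}"

definition ancestor :: "'a set set \<Rightarrow> 'a \<Rightarrow> 'a \<Rightarrow> 'a \<Rightarrow> bool" where
  "ancestor E r a v \<longleftrightarrow> a \<in> set (tpath E r v)"

definition depth :: "'a set set \<Rightarrow> 'a \<Rightarrow> 'a \<Rightarrow> nat" where
  "depth E r v = length (tpath E r v)"

definition apex :: "'a set set \<Rightarrow> 'a \<Rightarrow> 'a set \<Rightarrow> 'a" where
  "apex E r l = (ARG_MIN (depth E r) x. x \<in> lverts E l)"

definition is_uplink :: "'a set \<Rightarrow> 'a set set \<Rightarrow> 'a \<Rightarrow> 'a set \<Rightarrow> bool" where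
  "is_uplink V E r u \<longleftrightarrow>
     (\<exists>t b. u = {t, b} \<and> t \<in> V \<and> b \<in> V \<and> t \<noteq> b \<and> ancestor E r t b)"

definition Lup :: "'a set \<Rightarrow> 'a set set \<Rightarrow> 'a \<Rightarrow> 'a set set" where
  "Lup V E r = {u. is_uplink V E r u}"

definition utop :: "'a set set \<Rightarrow> 'a \<Rightarrow> 'a set \<Rightarrow> 'a" where
  "utop E r u = (THE t. \<exists>b. u = {t, b} \<and> t \<noteq> b \<and> ancestor E r t b)"

definition ubot :: "'a set set \<Rightarrow> 'a \<Rightarrow> 'a set \<Rightarrow> 'a" where
  "ubot E r u = (THE b. \<exists>t. u = {t, b} \<and> t \<noteq> b \<and> ancestor E r t b)"

definition Bset :: "'a set set \<Rightarrow> 'a \<Rightarrow> 'a set set \<Rightarrow> 'a \<Rightarrow> 'a set set" where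
  "Bset E r F v = {l \<in> F. ancestor E r v (apex E r l)}"

definition vu :: "'a set set \<Rightarrow> 'a \<Rightarrow> 'a set set \<Rightarrow> 'a set \<Rightarrow> 'a" where
  "vu E r F u = (ARG_MAX (depth E r) v.
      ancestor E r v (utop E r u) \<and> lpath E u \<subseteq> \<Union>(lpath E ` Bset E r F v))"

definition valid_Fu :: "'a set set \<Rightarrow> 'a \<Rightarrow> 'a set set \<Rightarrow> 'a set \<Rightarrow> 'a set set \<Rightarrow> bool" where
  "valid_Fu E r F u S \<longleftrightarrow> S \<subseteq> Bset E r F (vu E r F u) \<and>
     lpath E u \<subseteq> \<Union>(lpath E ` S) \<and>
     (\<forall>S'. S' \<subset> S \<longrightarrow> \<not> lpath E u \<subseteq> \<Union>(lpath E ` S'))"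

definition Pul :: "'a set set \<Rightarrow> 'a set set \<Rightarrow> 'a set \<Rightarrow> 'a set \<Rightarrow> 'a set set" where
  "Pul E S u l = lpath E u - \<Union>(lpath E ` (S - {l}))"

definition edge_pos :: "'a list \<Rightarrow> 'a set \<Rightarrow> nat" where
  "edge_pos xs e = (LEAST i. Suc i < length xs \<and> {xs ! i, xs ! Suc i} = e)"

definition prec_u :: "'a set set \<Rightarrow> 'a \<Rightarrow> 'a set set \<Rightarrow> 'a set \<Rightarrow> 'a set \<Rightarrow> 'a set \<Rightarrow> bool" where
  "prec_u E r S u l1 l2 \<longleftrightarrow>
     (\<forall>e1\<in>Pul E S u l1. \<forall>e2\<in>Pul E S u l2.
        edge_pos (tpath E (utop E r u) (ubot E r u)) e1
          < edge_pos (tpath E (utop E r u) (ubot E r u)) e2)"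

definition Au :: "'a set set \<Rightarrow> 'a \<Rightarrow> 'a set set \<Rightarrow> 'a set \<Rightarrow> ('a set \<times> 'a set) set" where
  "Au E r S u = {(l1, l2). l1 \<in> S \<and> l2 \<in> S \<and> l1 \<noteq> l2 \<and> prec_u E r S u l1 l2 \<and>
      \<not> (\<exists>l3\<in>S. l3 \<noteq> l1 \<and> l3 \<noteq> l2 \<and> prec_u E r S u l1 l3 \<and> prec_u E r S u l3 l2)}"

text \<open>Arc set of the dependency graph of U (with the choice Fu of the sets F_u),
  as a disjoint union: arcs are tagged with the up-link u they come from.\<close>
definition dep_arcs :: "'a set set \<Rightarrow> 'a \<Rightarrow> 'a set set \<Rightarrow> ('a set \<Rightarrow> 'a set set)
    \<Rightarrow> ('a set \<times> 'a set \<times> 'a set) set" where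
  "dep_arcs E r U Fu = {(u, l1, l2). u \<in> U \<and> (l1, l2) \<in> Au E r (Fu u) u}"

definition is_branching :: "'v set \<Rightarrow> ('i \<times> 'v \<times> 'v) set \<Rightarrow> bool" where
  "is_branching N A \<longleftrightarrow> finite A \<and>
     acyclic {(x, y). \<exists>i. (i, x, y) \<in> A} \<and>
     (\<forall>y\<in>N. card {(i, x). (i, x, y) \<in> A} \<le> 1)"

end

theory Submission
  imports Defs
begin


lemma spath_take: "is_spath E xs \<Longrightarrow> 0 < n \<Longrightarrow> is_spath E (take n xs)"
  by (auto simp: is_spath_def)

lemma spath_drop: "is_spath E xs \<Longrightarrow> n < length xs \<Longrightarrow> is_spath E (drop n xs)"
  by (auto simp: is_spath_def add.commute)

lemma spath_rev: assumes "is_spath E xs" shows "is_spath E (rev xs)"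
  unfolding is_spath_def
proof (intro conjI allI impI)
  show "rev xs \<noteq> []" "distinct (rev xs)" using assms by (auto simp: is_spath_def)
  fix i assume i: "Suc i < length (rev xs)"
  define j where "j = length xs - Suc (Suc i)"
  have "{xs ! j, xs ! Suc j} \<in> E" using assms i by (auto simp: is_spath_def j_def)
  moreover have "rev xs ! i = xs ! Suc j" "rev xs ! Suc i = xs ! j"
    using i by (auto simp: rev_nth j_def Suc_diff_Suc)
  ultimately show "{rev xs ! i, rev xs ! Suc i} \<in> E" by (simp add: insert_commute)
qed

lemma spath_append: assumes "is_spath E xs" "is_spath E ys" "set xs \<inter> set ys = {}"
  "{last xs, hd ys} \<in> E" shows "is_spath E (xs @ ys)"
  unfolding is_spath_def
proof (intro conjI allI impI)
  show "xs @ ys \<noteq> []" "distinct (xs @ ys)" using assms by (auto simp: is_spath_def)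
  fix i assume i: "Suc i < length (xs @ ys)"
  have nx: "xs \<noteq> []" and ny: "ys \<noteq> []" using assms by (auto simp: is_spath_def)
  consider "Suc i < length xs" | "Suc i = length xs" | "length xs \<le> i" by linarith
  then show "{(xs @ ys) ! i, (xs @ ys) ! Suc i} \<in> E"
  proof cases
    case 1 then show ?thesis using assms(1) by (simp add: nth_append is_spath_def)
  next
    case 2
    then have "i = length xs - Suc 0" by simp
    then show ?thesis using assms(4) nx ny 2
      by (simp add: nth_append last_conv_nth hd_conv_nth)
  next
    case 3
    then have "Suc (i - length xs) < length ys" using i by auto
    then have "{ys ! (i - length xs), ys ! Suc (i - length xs)} \<in> E"
      using assms(2) by (simp add: is_spath_def)
    then show ?thesis using 3 by (simp add: nth_append Suc_diff_le)
  qed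
qed

lemma path_edges_Nil[simp]: "path_edges [] = {}" and path_edges_single[simp]: "path_edges [x] = {}"
  by (auto simp: path_edges_def)

lemma path_edges_Cons2[simp]: "path_edges (x # y # zs) = insert {x, y} (path_edges (y # zs))"
proof (rule set_eqI, rule iffI)
  fix e assume "e \<in> path_edges (x # y # zs)"
  then obtain i where i: "Suc i < length (x#y#zs)" "e = {(x#y#zs) ! i, (x#y#zs) ! Suc i}"
    by (auto simp: path_edges_def)
  show "e \<in> insert {x, y} (path_edges (y # zs))"
  proof (cases i)
    case 0 then show ?thesis using i by simp
  next
    case (Suc j)
    then have "Suc j < length (y#zs)" "e = {(y#zs) ! j, (y#zs) ! Suc j}" using i by auto
    then show ?thesis unfolding path_edges_def by blast
  qed
next
  fix e assume "e \<in> insert {x, y} (path_edges (y # zs))"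
  then consider "e = {x,y}" | j where "Suc j < length (y#zs)" "e = {(y#zs) ! j, (y#zs) ! Suc j}"
    by (auto simp: path_edges_def)
  then show "e \<in> path_edges (x # y # zs)"
  proof cases
    case 1
    have "Suc 0 < length (x#y#zs)" "e = {(x#y#zs) ! 0, (x#y#zs) ! Suc 0}" using 1 by auto
    then show ?thesis unfolding path_edges_def by blast
  next
    case 2
    then have "Suc (Suc j) < length (x#y#zs)" "e = {(x#y#zs) ! Suc j, (x#y#zs) ! Suc (Suc j)}" by auto
    then show ?thesis unfolding path_edges_def by blast
  qed
qed

lemma path_edges_Cons: "path_edges (x # zs) = path_edges zs \<union> (if zs = [] then {} else {{x, hd zs}})"
  by (cases zs) auto

lemma path_edges_append: "path_edges (xs @ ys) = path_edges xs \<union> path_edges ys \<union>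
   (if xs = [] \<or> ys = [] then {} else {{last xs, hd ys}})"
proof (induction xs)
  case Nil then show ?case by simp
next
  case (Cons x xs)
  then show ?case by (cases xs; cases ys) (auto simp: path_edges_Cons)
qed

lemma path_edges_rev[simp]: "path_edges (rev xs) = path_edges xs"
proof (induction xs)
  case Nil then show ?case by simp
next
  case (Cons x xs)
  then show ?case by (cases xs) (auto simp: path_edges_append path_edges_Cons insert_commute last_rev)
qed

lemma path_edges_revapp: assumes "xs \<noteq> []"
  shows "path_edges (rev xs @ B) = path_edges xs \<union> path_edges (hd xs # B)"
proof -
  have "path_edges (rev xs @ B) = path_edges xs \<union> path_edges B \<union> (if B = [] then {} else {{hd xs, hd B}})"
    using assms by (simp add: path_edges_append last_rev)
  then show ?thesis by (simp add: path_edges_Cons Un_ac)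
qed



locale rtree =
  fixes V :: "'a set" and E :: "'a set set" and r :: 'a
  assumes tree: "is_tree V E" and root: "r \<in> V"
begin

abbreviation P where "P v \<equiv> tpath E r v"
abbreviation anc where "anc v \<equiv> set (tpath E r v)"
abbreviation dep where "dep v \<equiv> length (tpath E r v)"

lemma finV: "finite V" using tree by (simp add: is_tree_def)
lemma edgeV: "e \<in> E \<Longrightarrow> \<exists>a b. a \<in> V \<and> b \<in> V \<and> a \<noteq> b \<and> e = {a,b}"
  using tree by (simp add: is_tree_def)
lemma uniq: "a \<in> V \<Longrightarrow> b \<in> V \<Longrightarrow> \<exists>!xs. is_spath E xs \<and> hd xs = a \<and> last xs = b"
  using tree by (simp add: is_tree_def)

lemma spath_set: assumes "is_spath E xs" "hd xs \<in> V" shows "set xs \<subseteq> V"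
proof
  fix x assume "x \<in> set xs"
  then obtain i where i: "i < length xs" "xs ! i = x" by (auto simp: in_set_conv_nth)
  show "x \<in> V"
  proof (cases i)
    case 0 then show ?thesis using assms i by (cases xs) auto
  next
    case (Suc j)
    have H: "\<forall>k. Suc k < length xs \<longrightarrow> {xs!k, xs!Suc k} \<in> E" using assms(1) by (simp add: is_spath_def)
    have "{xs!j, xs!Suc j} \<in> E" using H i(1) Suc by blast
    then obtain a b where "a \<in> V" "b \<in> V" "{xs!j, xs!Suc j} = {a,b}" using edgeV by blast
    then show ?thesis using i Suc by (auto simp: doubleton_eq_iff)
  qed
qed

lemma tpath: assumes "a \<in> V" "b \<in> V"
  shows "is_spath E (tpath E a b)" "hd (tpath E a b) = a" "last (tpath E a b) = b"
  using theI'[OF uniq[OF assms]] unfolding tpath_def by auto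

lemma tpath_eq: assumes "is_spath E xs" "hd xs = a" "last xs = b" "a \<in> V" "b \<in> V"
  shows "tpath E a b = xs"
  unfolding tpath_def using the1_equality[OF uniq[OF assms(4,5)]] assms by auto

lemma P_props: assumes "v \<in> V"
  shows "is_spath E (P v)" "hd (P v) = r" "last (P v) = v" "P v \<noteq> []" "distinct (P v)"
    "anc v \<subseteq> V" "v \<in> anc v" "r \<in> anc v" "dep v \<ge> 1"
proof -
  show s: "is_spath E (P v)" "hd (P v) = r" "last (P v) = v" using tpath[OF root assms] by auto
  show ne: "P v \<noteq> []" "distinct (P v)" using s by (auto simp: is_spath_def)
  show "anc v \<subseteq> V" using spath_set s root by auto
  show "v \<in> anc v" "r \<in> anc v" using s ne by (metis last_in_set, metis hd_in_set)
  show "dep v \<ge> 1" using ne by (cases "P v") auto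
qed

lemma prefix: assumes "v \<in> V" "i < dep v" shows "P (P v ! i) = take (Suc i) (P v)"
proof -
  have s: "is_spath E (take (Suc i) (P v))" using spath_take P_props[OF assms(1)] by auto
  have h: "hd (take (Suc i) (P v)) = r" using P_props[OF assms(1)] by (simp add: hd_take)
  have "take (Suc i) (P v) \<noteq> []" using P_props(4)[OF assms(1)] by simp
  moreover have "Suc i \<le> dep v" using assms(2) by simp
  ultimately have l: "last (take (Suc i) (P v)) = P v ! i" by (simp add: last_conv_nth min_absorb1)
  have iV: "P v ! i \<in> V" using P_props[OF assms(1)] assms(2) nth_mem by blast
  show ?thesis using tpath_eq[OF s h l root iV] by simp
qed

lemma dep_nth: assumes "v \<in> V" "i < dep v" shows "dep (P v ! i) = Suc i"
  using prefix[OF assms] assms(2) by simp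

lemma anc_info: assumes "v \<in> V" "x \<in> anc v"
  shows "x \<in> V" "P x = take (dep x) (P v)" "dep x \<le> dep v" "P v ! (dep x - 1) = x"
    "anc x \<subseteq> anc v" "dep x \<ge> 1"
proof -
  show "x \<in> V" using P_props(6)[OF assms(1)] assms(2) by auto
  obtain i where i: "i < dep v" "P v ! i = x" using assms(2) by (auto simp: in_set_conv_nth)
  have precv: "P x = take (Suc i) (P v)" using prefix[OF assms(1) i(1)] i(2) by simp
  then have d: "dep x = Suc i" using i by simp
  show "P x = take (dep x) (P v)" "dep x \<le> dep v" "P v ! (dep x - 1) = x" "dep x \<ge> 1"
    using precv d i by auto
  show "anc x \<subseteq> anc v" using precv by (simp add: set_take_subset)
qed

lemma anc_trans: "v \<in> V \<Longrightarrow> y \<in> anc v \<Longrightarrow> x \<in> anc y \<Longrightarrow> x \<in> anc v"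
  using anc_info(5) by blast

lemma chain: assumes "v \<in> V" "x \<in> anc v" "y \<in> anc v" "dep x \<le> dep y" shows "x \<in> anc y"
proof -
  obtain py: "P y = take (dep y) (P v)" using anc_info(2)[OF assms(1,3)] by blast
  have px: "P v ! (dep x - 1) = x" "dep x \<ge> 1" using anc_info[OF assms(1,2)] by auto
  have k: "dep x - 1 < dep y" using assms(4) px(2) by simp
  have "P y ! (dep x - 1) = take (dep y) (P v) ! (dep x - 1)" using py by metis
  also have "\<dots> = x" using k px by simp
  finally have "P y ! (dep x - 1) = x" .
  then show ?thesis using k by (metis nth_mem)
qed

lemma anc_dep_eq: assumes "y \<in> V" "x \<in> anc y" "dep x = dep y" shows "x = y"
proof -
  obtain px: "P x = take (dep x) (P y)" using anc_info(2)[OF assms(1,2)] by blast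
  have "take (dep x) (P y) = P y" using assms(3) by simp
  then have "P x = P y" using px by metis
  then show ?thesis using P_props(3) assms anc_info(1) by metis
qed

lemma anc_lt: assumes "y \<in> V" "x \<in> anc y" "x \<noteq> y" shows "dep x < dep y"
  using anc_info(3)[OF assms(1,2)] anc_dep_eq[OF assms(1,2)] assms(3) by linarith

lemma chain_eq: assumes "v \<in> V" "x \<in> anc v" "y \<in> anc v" "dep x = dep y" shows "x = y"
proof -
  have "x \<in> anc y" using chain[OF assms(1-3)] assms(4) by simp
  moreover have "y \<in> V" using anc_info(1)[OF assms(1,3)] .
  ultimately show ?thesis using anc_dep_eq assms(4) by blast
qed

lemma anc_lt_iff: assumes "v \<in> V" "x \<in> anc v" "y \<in> anc v"
  shows "dep x < dep y \<longleftrightarrow> x \<in> anc y \<and> x \<noteq> y"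
proof
  assume "dep x < dep y"
  then show "x \<in> anc y \<and> x \<noteq> y" using chain[OF assms(1-3)] by auto
next
  assume "x \<in> anc y \<and> x \<noteq> y"
  then show "dep x < dep y" using anc_lt anc_info(1)[OF assms(1,3)] by blast
qed

lemma dep_r: "dep r = 1"
proof -
  have "tpath E r r = [r]" by (rule tpath_eq) (auto simp: is_spath_def root)
  then show ?thesis by simp
qed

lemma dep_ge2: assumes "x \<in> V" "x \<noteq> r" shows "dep x \<ge> 2"
proof (rule ccontr)
  assume "\<not> dep x \<ge> 2"
  then have "dep x = 1" using P_props(9)[OF assms(1)] by simp
  then have "hd (P x) = last (P x)" by (cases "P x") auto
  then show False using P_props[OF assms(1)] assms(2) by simp
qed

definition par where "par x = P x ! (dep x - 2)"
definition pe where "pe x = {par x, x}"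

lemma par_props: assumes "x \<in> V" "x \<noteq> r"
  shows "par x \<in> anc x" "dep (par x) = dep x - 1" "pe x \<in> E" "par x \<in> V"
proof -
  have d: "dep x \<ge> 2" using dep_ge2 assms by simp
  show "par x \<in> anc x" unfolding par_def using d by simp
  show "dep (par x) = dep x - 1" unfolding par_def using dep_nth[OF assms(1)] d by simp
  have "{P x ! (dep x - 2), P x ! Suc (dep x - 2)} \<in> E" using P_props[OF assms(1)] d
    by (simp add: is_spath_def)
  moreover have "P x ! Suc (dep x - 2) = x" using P_props[OF assms(1)] d
    by (simp add: last_conv_nth Suc_diff_Suc numeral_2_eq_2)
  ultimately show "pe x \<in> E" by (simp add: pe_def par_def)
  show "par x \<in> V" using anc_info(1)[OF assms(1)] \<open>par x \<in> anc x\<close> by blast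
qed

lemma pe_nth: assumes "v \<in> V" "1 \<le> i" "i < dep v" shows "pe (P v ! i) = {P v ! (i - 1), P v ! i}"
proof -
  have "P (P v ! i) = take (Suc i) (P v)" using prefix assms by simp
  then have "par (P v ! i) = P v ! (i - 1)" unfolding par_def using assms by simp
  then show ?thesis by (simp add: pe_def)
qed

lemma pe_inj: "inj_on pe (V - {r})"
proof (rule inj_onI)
  fix x y assume x: "x \<in> V - {r}" and y: "y \<in> V - {r}" and e: "pe x = pe y"
  show "x = y"
  proof (rule ccontr)
    assume "x \<noteq> y"
    then have "x = par y" "y = par x" using e by (auto simp: pe_def doubleton_eq_iff)
    then have "dep x = dep y - 1" "dep y = dep x - 1" using par_props(2)[of x] par_props(2)[of y] x y
      by (metis DiffD1 DiffD2 insertI1)+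
    moreover have "dep x \<ge> 2" using dep_ge2[of x] x by blast
    ultimately show False by linarith
  qed
qed

end


context rtree
begin

lemma set_drop_P: assumes "v \<in> V" shows "set (drop k (P v)) = {x \<in> anc v. k < dep x}"
proof (rule set_eqI, rule iffI)
  fix x assume "x \<in> set (drop k (P v))"
  then obtain j where j: "j < dep v - k" "drop k (P v) ! j = x" by (auto simp: in_set_conv_nth)
  then have x: "x = P v ! (k + j)" "k + j < dep v" by auto
  then show "x \<in> {x \<in> anc v. k < dep x}" using dep_nth[OF assms x(2)] by auto
next
  fix x assume x: "x \<in> {x \<in> anc v. k < dep x}"
  then have a: "P v ! (dep x - 1) = x" "dep x \<le> dep v" using anc_info[OF assms] by auto
  have "drop k (P v) ! (dep x - 1 - k) = x" using a x by auto
  moreover have "dep x - 1 - k < length (drop k (P v))" using a x by auto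
  ultimately show "x \<in> set (drop k (P v))" by (metis nth_mem)
qed

lemma PE_drop: assumes "v \<in> V" "k < dep v"
  shows "path_edges (drop k (P v)) = pe ` {x \<in> anc v. Suc k < dep x}"
proof (rule set_eqI, rule iffI)
  fix e assume "e \<in> path_edges (drop k (P v))"
  then obtain i where i: "Suc i < dep v - k" "e = {drop k (P v) ! i, drop k (P v) ! Suc i}"
    by (auto simp: path_edges_def)
  then have e: "e = {P v ! (Suc (k + i) - 1), P v ! Suc (k + i)}" by simp
  have lt: "Suc (k + i) < dep v" using i by simp
  then have "e = pe (P v ! Suc (k + i))" using pe_nth[OF assms(1), of "Suc (k+i)"] e by simp
  moreover have "P v ! Suc (k + i) \<in> {x \<in> anc v. Suc k < dep x}"
    using dep_nth[OF assms(1) lt] lt by auto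
  ultimately show "e \<in> pe ` {x \<in> anc v. Suc k < dep x}" by blast
next
  fix e assume "e \<in> pe ` {x \<in> anc v. Suc k < dep x}"
  then obtain x where x: "x \<in> anc v" "Suc k < dep x" "e = pe x" by auto
  define j where "j = dep x - 1"
  have a: "P v ! j = x" "j < dep v" "1 \<le> j" using anc_info[OF assms(1) x(1)] x(2) by (auto simp: j_def)
  have "e = {P v ! (j - 1), P v ! j}" using pe_nth[OF assms(1) a(3) a(2)] x(3) a(1) by simp
  also have "\<dots> = {drop k (P v) ! (j - 1 - k), drop k (P v) ! Suc (j - 1 - k)}"
    using x(2) a by (simp add: j_def Suc_diff_Suc numeral_2_eq_2)
  finally have "e = {drop k (P v) ! (j - 1 - k), drop k (P v) ! Suc (j - 1 - k)}" .
  moreover have "Suc (j - 1 - k) < length (drop k (P v))" using a x(2) by (simp add: j_def)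
  ultimately show "e \<in> path_edges (drop k (P v))" unfolding path_edges_def by blast
qed

lemma anc_lca: assumes "a \<in> V" "c \<in> V" shows "\<exists>m\<in>V. anc a \<inter> anc c = anc m"
proof -
  have "\<exists>m. m \<in> anc a \<inter> anc c \<and> (\<forall>y. y \<in> anc a \<inter> anc c \<longrightarrow> dep y \<le> dep m)"
  proof (rule ex_has_greatest_nat[where b="Suc (dep a)"])
    show "r \<in> anc a \<inter> anc c" using P_props[OF assms(1)] P_props[OF assms(2)] by blast
    show "\<forall>y. y \<in> anc a \<inter> anc c \<longrightarrow> dep y < Suc (dep a)"
      using anc_info(3)[OF assms(1)] by (simp add: less_Suc_eq_le)
  qed
  then obtain m where m: "m \<in> anc a" "m \<in> anc c" "\<And>y. y \<in> anc a \<Longrightarrow> y \<in> anc c \<Longrightarrow> dep y \<le> dep m"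
    by blast
  have "anc a \<inter> anc c = anc m"
  proof
    show "anc m \<subseteq> anc a \<inter> anc c" using anc_info(5) m assms by blast
    show "anc a \<inter> anc c \<subseteq> anc m" using chain[OF assms(1) _ m(1)] m(3) by blast
  qed
  then show ?thesis using m anc_info(1)[OF assms(1)] by blast
qed

lemma anc_minus: assumes "a \<in> V" "m \<in> anc a" shows "{x \<in> anc a. dep m < dep x} = anc a - anc m"
  using chain[OF assms(1) _ assms(2)] anc_info(3)[OF anc_info(1)[OF assms]] by force

lemma tpath_lca: assumes "a \<in> V" "c \<in> V" "m \<in> V" "anc a \<inter> anc c = anc m"
  shows "tpath E a c = rev (drop (dep m - 1) (P a)) @ drop (dep m) (P c)"
proof -
  define d where "d = dep m"
  have ma: "m \<in> anc a" and mc: "m \<in> anc c" using assms P_props(7)[OF assms(3)] by auto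
  have d1: "1 \<le> d" "d \<le> dep a" "d \<le> dep c" using anc_info[OF assms(1) ma] anc_info[OF assms(2) mc]
    by (auto simp: d_def)
  have am: "P a ! (d - 1) = m" and cm: "P c ! (d - 1) = m"
    using anc_info[OF assms(1) ma] anc_info[OF assms(2) mc] by (auto simp: d_def)
  define A where "A = drop (d - 1) (P a)"
  define B where "B = drop d (P c)"
  have "d - 1 < dep a" using d1 by simp
  then have sA: "is_spath E A" using spath_drop P_props(1)[OF assms(1)] by (simp add: A_def)
  have hA: "hd A = m" using am d1 by (simp add: A_def hd_drop_conv_nth)
  have lA: "last A = a" using d1 P_props[OF assms(1)] by (simp add: A_def)
  have nA: "A \<noteq> []" using d1 by (simp add: A_def)
  show ?thesis unfolding d_def[symmetric] A_def[symmetric] B_def[symmetric]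
  proof (cases "d = dep c")
    case True
    then have "B = []" by (simp add: B_def)
    moreover have "m = c" using anc_dep_eq[OF assms(2) mc] True by (simp add: d_def)
    ultimately show "tpath E a c = rev A @ B"
      using tpath_eq[OF spath_rev[OF sA] _ _ assms(1,2)] hA lA nA by (simp add: hd_rev last_rev)
  next
    case False
    then have dc: "d < dep c" using d1 by simp
    have sB: "is_spath E B" using spath_drop P_props[OF assms(2)] dc by (simp add: B_def)
    have hB: "hd B = P c ! d" using dc by (simp add: B_def hd_drop_conv_nth)
    have lB: "last B = c" using dc P_props[OF assms(2)] by (simp add: B_def)
    have nB: "B \<noteq> []" using dc by (simp add: B_def)
    have disj: "set (rev A) \<inter> set B = {}"
    proof (rule ccontr)
      assume "set (rev A) \<inter> set B \<noteq> {}"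
      then obtain x where "x \<in> set A" "x \<in> set B" by auto
      then have x: "x \<in> anc a" "x \<in> anc c" "d < dep x"
        using set_drop_P[OF assms(1), of "d-1"] set_drop_P[OF assms(2), of d] d1
        by (auto simp: A_def B_def)
      then have "x \<in> anc m" using assms(4) by blast
      then show False using anc_info(3)[OF assms(3)] x(3) d_def by fastforce
    qed
    have H: "\<forall>i. Suc i < dep c \<longrightarrow> {P c ! i, P c ! Suc i} \<in> E"
      using P_props(1)[OF assms(2)] by (simp add: is_spath_def)
    have "Suc (d - 1) < dep c" using dc d1 by simp
    then have "{P c ! (d - 1), P c ! Suc (d - 1)} \<in> E" using H by blast
    then have ed: "{last (rev A), hd B} \<in> E" using cm hA hB d1 nA by (simp add: last_rev)
    have "is_spath E (rev A @ B)" by (rule spath_append[OF spath_rev[OF sA] sB disj ed])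
    then show "tpath E a c = rev A @ B"
      using tpath_eq[OF _ _ _ assms(1,2)] lA lB nA nB by (simp add: hd_rev)
  qed
qed

lemma lpath_pe: assumes "a \<in> V" "c \<in> V"
  shows "path_edges (tpath E a c) = pe ` ((anc a \<union> anc c) - (anc a \<inter> anc c))"
proof -
  obtain m where m: "m \<in> V" "anc a \<inter> anc c = anc m" using anc_lca[OF assms] by blast
  define d where "d = dep m"
  have ma: "m \<in> anc a" and mc: "m \<in> anc c" using m P_props(7)[OF m(1)] by auto
  have d1: "1 \<le> d" "d \<le> dep a" "d \<le> dep c" using anc_info[OF assms(1) ma] anc_info[OF assms(2) mc]
    by (auto simp: d_def)
  have cm: "P c ! (d - 1) = m" using anc_info[OF assms(2) mc] by (auto simp: d_def)
  have nA: "drop (d - 1) (P a) \<noteq> []" using d1 by simp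
  have hA: "hd (drop (d - 1) (P a)) = m" using anc_info[OF assms(1) ma] d1
    by (simp add: d_def hd_drop_conv_nth)
  have dd: "m # drop d (P c) = drop (d - 1) (P c)"
    using Cons_nth_drop_Suc[of "d - 1" "P c"] d1 cm by simp
  have "path_edges (tpath E a c) = path_edges (drop (d - 1) (P a)) \<union> path_edges (drop (d - 1) (P c))"
    using tpath_lca[OF assms m] path_edges_revapp[OF nA] hA dd by (simp add: d_def)
  also have "\<dots> = pe ` {x \<in> anc a. d < dep x} \<union> pe ` {x \<in> anc c. d < dep x}"
    using PE_drop[OF assms(1), of "d - 1"] PE_drop[OF assms(2), of "d - 1"] d1 by simp
  also have "\<dots> = pe ` (anc a - anc m) \<union> pe ` (anc c - anc m)"
    using anc_minus[OF assms(1) ma] anc_minus[OF assms(2) mc] by (simp add: d_def)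
  also have "\<dots> = pe ` ((anc a \<union> anc c) - (anc a \<inter> anc c))" using m(2) by blast
  finally show ?thesis .
qed

end


context rtree
begin

definition W where "W a c = (anc a \<union> anc c) - (anc a \<inter> anc c)"
definition Wl where "Wl l = {x \<in> V. x \<noteq> r \<and> pe x \<in> lpath E l}"
definition islink where "islink l \<longleftrightarrow> (\<exists>a c. l = {a, c} \<and> a \<in> V \<and> c \<in> V)"
definition mv where "mv l = (SOME m. m \<in> V \<and> (\<Inter>x\<in>l. anc x) = anc m)"

lemma W_sym: "W a c = W c a" by (auto simp: W_def)

lemma W_sub: assumes "a \<in> V" "c \<in> V" shows "W a c \<subseteq> V - {r}"
  using P_props[OF assms(1)] P_props[OF assms(2)] by (auto simp: W_def)

lemma mv_props: assumes "a \<in> V" "c \<in> V"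
  shows "mv {a, c} \<in> V" "anc a \<inter> anc c = anc (mv {a, c})"
proof -
  have "\<exists>m. m \<in> V \<and> (\<Inter>x\<in>{a,c}. anc x) = anc m" using anc_lca[OF assms] by auto
  from someI_ex[OF this] show "mv {a, c} \<in> V" "anc a \<inter> anc c = anc (mv {a, c})"
    unfolding mv_def by auto
qed

lemma lpath_link: assumes "a \<in> V" "c \<in> V" shows "lpath E {a, c} = pe ` W a c"
proof -
  have "{path_edges (tpath E a' b') | a' b'. {a, c} = {a', b'}} = {pe ` W a c}"
  proof (rule set_eqI, rule iffI)
    fix X assume "X \<in> {path_edges (tpath E a' b') | a' b'. {a, c} = {a', b'}}"
    then obtain a' b' where X: "X = path_edges (tpath E a' b')" "{a, c} = {a', b'}" by blast
    then have "(a' = a \<and> b' = c) \<or> (a' = c \<and> b' = a)" by (auto simp: doubleton_eq_iff)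
    then show "X \<in> {pe ` W a c}" using X lpath_pe assms W_sym unfolding W_def by auto
  next
    fix X assume "X \<in> {pe ` W a c}"
    then have "X = path_edges (tpath E a c)" using lpath_pe[OF assms] by (simp add: W_def)
    then show "X \<in> {path_edges (tpath E a' b') | a' b'. {a, c} = {a', b'}}" by blast
  qed
  then show ?thesis by (simp add: lpath_def)
qed

lemma Wl_link: assumes "a \<in> V" "c \<in> V" shows "Wl {a, c} = W a c"
proof -
  have "\<And>x. x \<in> V - {r} \<Longrightarrow> pe x \<in> pe ` W a c \<longleftrightarrow> x \<in> W a c"
    using inj_on_image_mem_iff[OF pe_inj] W_sub[OF assms] by blast
  then show ?thesis using W_sub[OF assms] by (auto simp: Wl_def lpath_link[OF assms])
qed

lemma lpath_Wl: assumes "islink l" shows "lpath E l = pe ` Wl l"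
  using assms lpath_link Wl_link by (auto simp: islink_def)

lemma Wl_sub: "Wl l \<subseteq> V - {r}" by (auto simp: Wl_def)

lemma K1_aux: assumes "a \<in> V" "y \<in> anc a" "y \<notin> anc c" "anc a \<inter> anc c = anc m" "m \<in> V"
  shows "m \<in> anc y \<and> dep m < dep y"
proof -
  have ma: "m \<in> anc a" using assms(4,5) P_props(7) by blast
  have "\<not> dep y \<le> dep m"
  proof
    assume "dep y \<le> dep m"
    then have "y \<in> anc m" using chain[OF assms(1,2) ma] by blast
    then show False using assms(3,4) by blast
  qed
  then have "dep m < dep y" by simp
  then show ?thesis using anc_lt_iff[OF assms(1) ma assms(2)] by blast
qed

lemma K1: assumes "islink l" "y \<in> Wl l" shows "mv l \<in> anc y \<and> dep (mv l) < dep y"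
proof -
  obtain a c where l: "l = {a, c}" "a \<in> V" "c \<in> V" using assms(1) by (auto simp: islink_def)
  have y: "y \<in> W a c" using assms(2) Wl_link l by simp
  have m: "mv l \<in> V" "anc a \<inter> anc c = anc (mv l)" "anc c \<inter> anc a = anc (mv l)"
    using mv_props[OF l(2,3)] l(1) by auto
  show ?thesis
  proof (cases "y \<in> anc a")
    case True
    then have "y \<notin> anc c" using y by (auto simp: W_def)
    then show ?thesis using K1_aux[OF l(2) True _ m(2,1)] by blast
  next
    case False
    then have "y \<in> anc c" using y by (auto simp: W_def)
    then show ?thesis using K1_aux[OF l(3) _ False m(3,1)] by blast
  qed
qed

lemma K2: assumes "islink l" "z \<in> V" "y \<in> anc z" "z \<in> Wl l" "y \<notin> Wl l"
  shows "y \<in> anc (mv l)"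
proof -
  obtain a c where l: "l = {a, c}" "a \<in> V" "c \<in> V" using assms(1) by (auto simp: islink_def)
  have m: "anc a \<inter> anc c = anc (mv l)" using mv_props[OF l(2,3)] l(1) by auto
  have z: "z \<in> W a c" and y: "y \<notin> W a c" using assms(4,5) Wl_link l by auto
  have "y \<in> anc a \<or> y \<in> anc c" using z anc_trans[OF l(2) _ assms(3)] anc_trans[OF l(3) _ assms(3)]
    by (auto simp: W_def)
  then have "y \<in> anc a \<inter> anc c" using y by (auto simp: W_def)
  then show ?thesis using m by blast
qed

lemma convex: assumes "islink l" "b \<in> V" "x \<in> Wl l" "z \<in> Wl l" "x \<in> anc b" "y \<in> anc b" "z \<in> anc b"
  "dep x \<le> dep y" "dep y \<le> dep z" shows "y \<in> Wl l"
proof (rule ccontr)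
  assume ny: "y \<notin> Wl l"
  have "y \<in> anc z" using chain[OF assms(2,6,7,9)] .
  then have "y \<in> anc (mv l)" using K2[OF assms(1) _ _ assms(4) ny] anc_info(1)[OF assms(2,7)] by blast
  moreover have "mv l \<in> V" using K1[OF assms(1,3)] anc_info(1)[OF _ _] assms(3) Wl_sub by blast
  ultimately have "dep y \<le> dep (mv l)" using anc_info(3) by blast
  then show False using K1[OF assms(1,3)] assms(8) by linarith
qed

lemma anc_antisym: assumes "x \<in> V" "y \<in> V" "x \<in> anc y" "y \<in> anc x" shows "x = y"
  using anc_info(3)[OF assms(2,3)] anc_info(3)[OF assms(1,4)] anc_dep_eq[OF assms(2,3)] by simp

lemma uplink: assumes "t \<in> V" "b \<in> V" "t \<noteq> b" "t \<in> anc b"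
  shows "utop E r {t, b} = t" "ubot E r {t, b} = b" "Wl {t, b} = anc b - anc t"
    "tpath E t b = drop (dep t - 1) (P b)"
proof -
  have no: "\<not> (b \<in> anc t)" using anc_antisym[OF assms(1,2,4)] assms(3) by blast
  show "utop E r {t, b} = t" unfolding utop_def
  proof (rule the_equality)
    show "\<exists>b'. {t, b} = {t, b'} \<and> t \<noteq> b' \<and> ancestor E r t b'"
      using assms by (auto simp: ancestor_def)
    fix t' assume "\<exists>b'. {t, b} = {t', b'} \<and> t' \<noteq> b' \<and> ancestor E r t' b'"
    then show "t' = t" using no by (auto simp: ancestor_def doubleton_eq_iff)
  qed
  show "ubot E r {t, b} = b" unfolding ubot_def
  proof (rule the_equality)
    show "\<exists>t'. {t, b} = {t', b} \<and> t' \<noteq> b \<and> ancestor E r t' b"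
      using assms by (auto simp: ancestor_def)
    fix b' assume "\<exists>t'. {t, b} = {t', b'} \<and> t' \<noteq> b' \<and> ancestor E r t' b'"
    then show "b' = b" using no by (auto simp: ancestor_def doubleton_eq_iff)
  qed
  have "anc t \<subseteq> anc b" using anc_info(5)[OF assms(2,4)] .
  then show "Wl {t, b} = anc b - anc t" using Wl_link[OF assms(1,2)] by (auto simp: W_def)
  have d: "1 \<le> dep t" "dep t \<le> dep b" "P b ! (dep t - 1) = t" using anc_info[OF assms(2,4)] by auto
  then have lt: "dep t - 1 < dep b" by simp
  show "tpath E t b = drop (dep t - 1) (P b)"
  proof (rule tpath_eq[OF spath_drop[OF P_props(1)[OF assms(2)] lt] _ _ assms(1,2)])
    show "hd (drop (dep t - 1) (P b)) = t" using d lt by (simp add: hd_drop_conv_nth)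
    show "last (drop (dep t - 1) (P b)) = b" using lt P_props[OF assms(2)] by simp
  qed
qed

lemma edge_pos_up: assumes "t \<in> V" "b \<in> V" "t \<noteq> b" "t \<in> anc b" "x \<in> anc b - anc t"
  shows "dep t < dep x" "edge_pos (tpath E t b) (pe x) = dep x - dep t - 1"
proof -
  have xa: "x \<in> anc b" "x \<notin> anc t" using assms(5) by auto
  show dtx: "dep t < dep x"
  proof (rule ccontr)
    assume "\<not> dep t < dep x"
    then have "x \<in> anc t" using chain[OF assms(2) xa(1) assms(4)] by simp
    then show False using xa by simp
  qed
  have d: "1 \<le> dep t" "dep x \<le> dep b" "P b ! (dep x - 1) = x" "x \<in> V"
    using anc_info[OF assms(2,4)] anc_info[OF assms(2) xa(1)] by auto
  define zs where "zs = drop (dep t - 1) (P b)"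
  define i0 where "i0 = dep x - dep t - 1"
  have zsn: "\<And>j. dep t - 1 + j < dep b \<Longrightarrow> zs ! j = P b ! (dep t - 1 + j)" by (simp add: zs_def)
  have lz: "length zs = dep b - (dep t - 1)" by (simp add: zs_def)
  have xr: "x \<in> V - {r}" using d dtx dep_r by auto
  have "edge_pos zs (pe x) = i0" unfolding edge_pos_def
  proof (rule Least_equality)
    have "Suc i0 < length zs" using lz dtx d by (simp add: i0_def)
    moreover have "zs ! i0 = P b ! (dep x - 1 - 1)" "zs ! Suc i0 = P b ! (dep x - 1)"
      using zsn dtx d by (auto simp: i0_def)
    moreover have "pe x = {P b ! (dep x - 1 - 1), P b ! (dep x - 1)}"
      using pe_nth[OF assms(2), of "dep x - 1"] dtx d by simp
    ultimately show "Suc i0 < length zs \<and> {zs ! i0, zs ! Suc i0} = pe x" by simp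
  next
    fix j assume j: "Suc j < length zs \<and> {zs ! j, zs ! Suc j} = pe x"
    have "dep t \<le> dep b" using anc_info(3)[OF assms(2,4)] .
    then have "length zs = Suc (dep b - dep t)" using lz d(1) by linarith
    then have jl: "dep t + j < dep b" using j by linarith
    have "zs ! j = P b ! (dep t + j - 1)" "zs ! Suc j = P b ! (dep t + j)"
      using zsn jl d by auto
    then have "pe (P b ! (dep t + j)) = pe x" using pe_nth[OF assms(2), of "dep t + j"] jl d j by simp
    moreover have "P b ! (dep t + j) \<in> V - {r}"
    proof -
      have dn: "dep (P b ! (dep t + j)) = Suc (dep t + j)" using dep_nth[OF assms(2) jl] .
      have "P b ! (dep t + j) \<in> anc b" using jl by simp
      then have "P b ! (dep t + j) \<in> V" using P_props(6)[OF assms(2)] by blast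
      moreover have "P b ! (dep t + j) \<noteq> r" using dn dep_r d(1) by auto
      ultimately show ?thesis by blast
    qed
    ultimately have "P b ! (dep t + j) = x" using inj_onD[OF pe_inj] xr by blast
    then have "dep x = Suc (dep t + j)" using dep_nth[OF assms(2) jl] by simp
    then show "i0 \<le> j" by (simp add: i0_def)
  qed
  then show "edge_pos (tpath E t b) (pe x) = dep x - dep t - 1"
    using uplink(4)[OF assms(1-4)] by (simp add: zs_def i0_def)
qed

end


context rtree
begin

definition Q where "Q D S l = D - \<Union>(Wl ` (S - {l}))"
definition precv where "precv D S l1 l2 \<longleftrightarrow> (\<forall>x\<in>Q D S l1. \<forall>y\<in>Q D S l2. dep x < dep y)"

lemma Q_in: assumes "l \<in> S" "x \<in> Q D S l" "D \<subseteq> \<Union>(Wl ` S)" shows "x \<in> Wl l" "x \<in> D"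
  using assms by (auto simp: Q_def)

lemma Q_out: assumes "l' \<in> S" "l' \<noteq> l" "x \<in> Q D S l" shows "x \<notin> Wl l'"
  using assms by (auto simp: Q_def)

context
  fixes b t D S
  assumes bV: "b \<in> V" and tV: "t \<in> V" and Dd: "D = anc b - anc t"
    and links: "\<forall>l\<in>S. islink l" and cov: "D \<subseteq> \<Union>(Wl ` S)" and ne: "\<forall>l\<in>S. Q D S l \<noteq> {}"
begin

lemma QD: "x \<in> Q D S l \<Longrightarrow> x \<in> anc b" using Dd by (auto simp: Q_def)

lemma half: assumes "l1 \<in> S" "l2 \<in> S" "l1 \<noteq> l2" "y1 \<in> Q D S l1" "y2 \<in> Q D S l2" "dep y1 < dep y2"
  shows "precv D S l1 l2"
  unfolding precv_def
proof (intro ballI)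
  fix x z assume x: "x \<in> Q D S l1" and z: "z \<in> Q D S l2"
  have w: "y1 \<in> Wl l1" "x \<in> Wl l1" "y2 \<in> Wl l2" "z \<in> Wl l2"
    using Q_in[OF _ _ cov] assms x z by auto
  have nw: "y1 \<notin> Wl l2" "x \<notin> Wl l2" "y2 \<notin> Wl l1" "z \<notin> Wl l1"
    using Q_out assms x z by metis+
  have a: "y1 \<in> anc b" "x \<in> anc b" "y2 \<in> anc b" "z \<in> anc b" using QD assms x z by auto
  show "dep x < dep z"
  proof (rule ccontr)
    assume "\<not> dep x < dep z"
    then have zx: "dep z \<le> dep x" by simp
    show False
    proof (cases "dep z \<le> dep y1")
      case True
      then have "y1 \<in> Wl l2" using convex[OF links[rule_format, OF assms(2)] bV w(4) w(3) a(4) a(1) a(3)] assms(6)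
        by simp
      then show False using nw by simp
    next
      case False
      then have "z \<in> Wl l1" using convex[OF links[rule_format, OF assms(1)] bV w(1) w(2) a(1) a(4) a(2)] zx
        by simp
      then show False using nw by simp
    qed
  qed
qed

lemma tot: assumes "l1 \<in> S" "l2 \<in> S" "l1 \<noteq> l2" shows "precv D S l1 l2 \<or> precv D S l2 l1"
proof -
  obtain y1 y2 where y: "y1 \<in> Q D S l1" "y2 \<in> Q D S l2" using ne assms by blast
  have "y1 \<noteq> y2" using Q_in[OF assms(2) y(2) cov] Q_out[OF assms(2) assms(3)[symmetric] y(1)] by blast
  then have "dep y1 \<noteq> dep y2" using chain_eq[OF bV QD QD] y by blast
  then show ?thesis using half[OF assms y] half[OF assms(2,1) assms(3)[symmetric] y(2,1)]
    by linarith
qed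

lemma irr: assumes "l \<in> S" shows "\<not> precv D S l l"
proof -
  obtain x where "x \<in> Q D S l" using ne assms by blast
  then show ?thesis by (auto simp: precv_def)
qed

lemma step: assumes "l1 \<in> S" "l2 \<in> S" "l1 \<noteq> l2" "precv D S l1 l2"
  shows "dep (mv l1) < dep (mv l2)" "mv l2 \<in> D"
proof -
  obtain y z where y: "y \<in> Q D S l1" and z: "z \<in> Q D S l2" using ne assms by blast
  have yz: "dep y < dep z" using assms(4) y z by (auto simp: precv_def)
  have a: "y \<in> anc b" "z \<in> anc b" using QD y z by auto
  have zV: "z \<in> V" using anc_info(1)[OF bV a(2)] .
  have yaz: "y \<in> anc z" using chain[OF bV a] yz by simp
  have ynw: "y \<notin> Wl l2" using Q_out[OF assms(2) assms(3)[symmetric] y] .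
  have zw: "z \<in> Wl l2" and yw: "y \<in> Wl l1" using Q_in[OF _ _ cov] assms y z by auto
  have ym: "y \<in> anc (mv l2)" using K2[OF links[rule_format, OF assms(2)] zV yaz zw ynw] .
  have m2: "mv l2 \<in> anc z" using K1[OF links[rule_format, OF assms(2)] zw] by blast
  have m2V: "mv l2 \<in> V" using anc_info(1)[OF zV m2] .
  have "dep y \<le> dep (mv l2)" using anc_info(3)[OF m2V ym] .
  then show "dep (mv l1) < dep (mv l2)" using K1[OF links[rule_format, OF assms(1)] yw] by linarith
  have "mv l2 \<in> anc b" using anc_trans[OF bV a(2) m2] .
  moreover have "mv l2 \<notin> anc t"
  proof
    assume "mv l2 \<in> anc t"
    then have "y \<in> anc t" using anc_trans[OF tV _ ym] by blast
    then show False using y Dd by (auto simp: Q_def)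
  qed
  ultimately show "mv l2 \<in> D" using Dd by simp
qed

lemma Au_uniq: assumes "(x, y) \<in> {(l1, l2). l1 \<in> S \<and> l2 \<in> S \<and> l1 \<noteq> l2 \<and> precv D S l1 l2 \<and>
      \<not> (\<exists>l3\<in>S. l3 \<noteq> l1 \<and> l3 \<noteq> l2 \<and> precv D S l1 l3 \<and> precv D S l3 l2)}"
    and "(x', y) \<in> {(l1, l2). l1 \<in> S \<and> l2 \<in> S \<and> l1 \<noteq> l2 \<and> precv D S l1 l2 \<and>
      \<not> (\<exists>l3\<in>S. l3 \<noteq> l1 \<and> l3 \<noteq> l2 \<and> precv D S l1 l3 \<and> precv D S l3 l2)}"
  shows "x = x'"
proof (rule ccontr)
  assume nx: "x \<noteq> x'"
  have h: "x \<in> S" "x' \<in> S" "y \<in> S" "precv D S x y" "precv D S x' y" "x \<noteq> y" "x' \<noteq> y"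
    using assms by auto
  from tot[OF h(1,2) nx] show False
  proof
    assume "precv D S x x'"
    then show False using assms(1) h nx by blast
  next
    assume "precv D S x' x"
    then show False using assms(2) h nx by blast
  qed
qed

end

end


lemma ball_img2: "(\<forall>a\<in>f ` A. \<forall>b\<in>f ` B. R a b) \<longleftrightarrow> (\<forall>x\<in>A. \<forall>y\<in>B. R (f x) (f y))"
  by blast

context rtree
begin

lemma per_u: assumes tV: "t \<in> V" and bV: "b \<in> V" and tb: "t \<noteq> b" and ta: "t \<in> anc b"
  and Sl: "\<forall>l\<in>S. islink l" and cov0: "lpath E {t, b} \<subseteq> \<Union>(lpath E ` S)"
  and mini: "\<forall>S'. S' \<subset> S \<longrightarrow> \<not> lpath E {t, b} \<subseteq> \<Union>(lpath E ` S')"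
  shows "anc b - anc t \<subseteq> \<Union>(Wl ` S)" "\<forall>l\<in>S. Q (anc b - anc t) S l \<noteq> {}"
    "Au E r S {t, b} = {(l1, l2). l1 \<in> S \<and> l2 \<in> S \<and> l1 \<noteq> l2 \<and> precv (anc b - anc t) S l1 l2 \<and>
      \<not> (\<exists>l3\<in>S. l3 \<noteq> l1 \<and> l3 \<noteq> l2 \<and> precv (anc b - anc t) S l1 l3 \<and> precv (anc b - anc t) S l3 l2)}"
    "lpath E {t, b} = pe ` (anc b - anc t)"
proof -
  define D where "D = anc b - anc t"
  have ul: "islink {t, b}" using tV bV by (auto simp: islink_def)
  have WD: "Wl {t, b} = D" using uplink(3)[OF tV bV tb ta] by (simp add: D_def)
  have lD: "lpath E {t, b} = pe ` D" using lpath_Wl[OF ul] WD by simp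
  then show "lpath E {t, b} = pe ` (anc b - anc t)" by (simp add: D_def)
  have DV: "D \<subseteq> V - {r}" using WD Wl_sub by blast
  have mem: "\<And>x l. x \<in> D \<Longrightarrow> pe x \<in> lpath E l \<longleftrightarrow> x \<in> Wl l" using DV by (auto simp: Wl_def)
  show cov: "anc b - anc t \<subseteq> \<Union>(Wl ` S)"
  proof
    fix x assume "x \<in> anc b - anc t"
    then have x: "x \<in> D" by (simp add: D_def)
    then have "pe x \<in> lpath E {t, b}" using lD by simp
    then obtain l where "l \<in> S" "pe x \<in> lpath E l" using cov0 by blast
    then show "x \<in> \<Union>(Wl ` S)" using mem[OF x] by blast
  qed
  show ne: "\<forall>l\<in>S. Q (anc b - anc t) S l \<noteq> {}"
  proof
    fix l assume l: "l \<in> S"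
    then have "S - {l} \<subset> S" by blast
    then have "\<not> lpath E {t, b} \<subseteq> \<Union>(lpath E ` (S - {l}))" using mini by blast
    then obtain e where e: "e \<in> lpath E {t, b}" "e \<notin> \<Union>(lpath E ` (S - {l}))" by blast
    then obtain x where x0: "x \<in> D" "e = pe x" unfolding lD by blast
    with e(2) have x: "x \<in> D" "pe x \<notin> \<Union>(lpath E ` (S - {l}))" by simp_all
    then have "x \<in> Q D S l" using mem[OF x(1)] by (auto simp: Q_def)
    then show "Q (anc b - anc t) S l \<noteq> {}" by (auto simp: D_def)
  qed
  have Pul: "\<And>l. Pul E S {t, b} l = pe ` Q D S l"
  proof -
    fix l
    show "Pul E S {t, b} l = pe ` Q D S l"
    proof (rule set_eqI, rule iffI)
      fix e assume "e \<in> Pul E S {t, b} l"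
      then obtain x where x: "e = pe x" "x \<in> D" "\<forall>l'\<in>S - {l}. pe x \<notin> lpath E l'"
        unfolding Pul_def lD by blast
      then have "\<forall>l'\<in>S - {l}. x \<notin> Wl l'" using mem by blast
      then have "x \<in> Q D S l" using x(2) unfolding Q_def by blast
      then show "e \<in> pe ` Q D S l" using x(1) by blast
    next
      fix e assume "e \<in> pe ` Q D S l"
      then obtain x where x: "e = pe x" "x \<in> D" "\<forall>l'\<in>S - {l}. x \<notin> Wl l'"
        unfolding Q_def by blast
      then have "\<forall>l'\<in>S - {l}. pe x \<notin> lpath E l'" using mem by blast
      then show "e \<in> Pul E S {t, b} l" using x unfolding Pul_def lD by blast
    qed
  qed
  have ep: "\<And>x. x \<in> D \<Longrightarrow> dep t < dep x \<and> edge_pos (tpath E t b) (pe x) = dep x - dep t - 1"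
    using edge_pos_up[OF tV bV tb ta] by (simp add: D_def)
  have QD: "\<And>l. Q D S l \<subseteq> D" by (auto simp: Q_def)
  have prec: "\<And>l1 l2. prec_u E r S {t, b} l1 l2 \<longleftrightarrow> precv D S l1 l2"
  proof -
    fix l1 l2
    have "prec_u E r S {t, b} l1 l2 \<longleftrightarrow>
      (\<forall>x\<in>Q D S l1. \<forall>y\<in>Q D S l2. edge_pos (tpath E t b) (pe x) < edge_pos (tpath E t b) (pe y))"
      unfolding prec_u_def uplink(1,2)[OF tV bV tb ta] Pul ball_img2 ..
    also have "\<dots> \<longleftrightarrow> precv D S l1 l2" unfolding precv_def
    proof (intro ball_cong refl)
      fix x y assume "x \<in> Q D S l1" "y \<in> Q D S l2"
      then have "x \<in> D" "y \<in> D" using QD by auto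
      then have "dep t < dep x" "dep t < dep y" "edge_pos (tpath E t b) (pe x) = dep x - dep t - 1"
        "edge_pos (tpath E t b) (pe y) = dep y - dep t - 1" using ep by blast+
      then show "edge_pos (tpath E t b) (pe x) < edge_pos (tpath E t b) (pe y) \<longleftrightarrow> dep x < dep y"
        by linarith
    qed
    finally show "prec_u E r S {t, b} l1 l2 \<longleftrightarrow> precv D S l1 l2" .
  qed
  show "Au E r S {t, b} = {(l1, l2). l1 \<in> S \<and> l2 \<in> S \<and> l1 \<noteq> l2 \<and> precv (anc b - anc t) S l1 l2 \<and>
      \<not> (\<exists>l3\<in>S. l3 \<noteq> l1 \<and> l3 \<noteq> l2 \<and> precv (anc b - anc t) S l1 l3 \<and> precv (anc b - anc t) S l3 l2)}"
    unfolding Au_def prec D_def ..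
qed

end

theorem lemma10:
  fixes V :: "'a set" and E :: "'a set set" and r :: 'a
    and L :: "'a set set" and w :: "'a set \<Rightarrow> real"
    and F :: "'a set set" and U :: "'a set set" and Fu :: "'a set \<Rightarrow> 'a set set"
  assumes tree: "is_tree V E"
    and root: "r \<in> V"
    and links: "L \<subseteq> {{a, b} | a b. a \<in> V \<and> b \<in> V \<and> a \<noteq> b}"
    and weights: "\<forall>l\<in>L. w l > 0"
    and FL: "F \<subseteq> L"
    and Fsol: "\<Union>(lpath E ` F) = E"
    and Uup: "U \<subseteq> Lup V E r"
    and Udisj: "\<forall>u1\<in>U. \<forall>u2\<in>U. u1 \<noteq> u2 \<longrightarrow> lpath E u1 \<inter> lpath E u2 = {}"
    and Fu: "\<forall>u\<in>U. valid_Fu E r F u (Fu u)"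
  shows "is_branching F (dep_arcs E r U Fu)"
proof -
  interpret T: rtree V E r using tree root by unfold_locales
  have finV: "finite V" by (rule T.finV)
  have "L \<subseteq> Pow V" using links by auto
  then have finL: "finite L" using finV finite_subset by blast
  then have finF: "finite F" using FL finite_subset by blast
  have "U \<subseteq> Pow V" using Uup by (auto simp: Lup_def is_uplink_def)
  then have finU: "finite U" using finV finite_subset by blast
  have Flink: "\<forall>l\<in>F. T.islink l"
  proof
    fix l assume "l \<in> F"
    then have "l \<in> {{a, b} | a b. a \<in> V \<and> b \<in> V \<and> a \<noteq> b}" using FL links by blast
    then show "T.islink l" unfolding T.islink_def by blast
  qed
  have SF: "\<And>u. u \<in> U \<Longrightarrow> Fu u \<subseteq> F"
  proof -
    fix u assume "u \<in> U"
    then have "Fu u \<subseteq> Bset E r F (vu E r F u)" using Fu by (simp add: valid_Fu_def)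
    moreover have "Bset E r F (vu E r F u) \<subseteq> F" unfolding Bset_def by blast
    ultimately show "Fu u \<subseteq> F" by blast
  qed
  have upl: "\<And>u. u \<in> U \<Longrightarrow> \<exists>t b. u = {t, b} \<and> t \<in> V \<and> b \<in> V \<and> t \<noteq> b \<and> t \<in> T.anc b"
    using Uup by (auto simp: Lup_def is_uplink_def ancestor_def)
  have key: "\<And>u x y. u \<in> U \<Longrightarrow> (x, y) \<in> Au E r (Fu u) u \<Longrightarrow>
      T.dep (T.mv x) < T.dep (T.mv y) \<and> T.pe (T.mv y) \<in> lpath E u
      \<and> (\<forall>x'. (x', y) \<in> Au E r (Fu u) u \<longrightarrow> x' = x) \<and> x \<in> F \<and> y \<in> F"
  proof -
    fix u x y assume u: "u \<in> U" and xy: "(x, y) \<in> Au E r (Fu u) u"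
    obtain t b where tb: "u = {t, b}" "t \<in> V" "b \<in> V" "t \<noteq> b" "t \<in> T.anc b" using upl[OF u] by blast
    define S where "S = Fu u"
    define D where "D = T.anc b - T.anc t"
    have Sl: "\<forall>l\<in>S. T.islink l" using SF[OF u] Flink by (auto simp: S_def)
    have v: "lpath E {t, b} \<subseteq> \<Union>(lpath E ` S)" "\<forall>S'. S' \<subset> S \<longrightarrow> \<not> lpath E {t, b} \<subseteq> \<Union>(lpath E ` S')"
      using Fu u tb(1) by (auto simp: valid_Fu_def S_def)
    note pu = T.per_u[OF tb(2-5) Sl v(1) v(2), folded D_def]
    have xy': "(x, y) \<in> Au E r S {t, b}" using xy tb(1) by (simp add: S_def)
    then have h: "x \<in> S" "y \<in> S" "x \<noteq> y" "T.precv D S x y" using pu(3) by auto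
    have s: "T.dep (T.mv x) < T.dep (T.mv y)" "T.mv y \<in> D"
      using T.step[OF tb(3,2) D_def Sl pu(1,2) h] by auto
    have "T.pe (T.mv y) \<in> lpath E u" using s(2) pu(4) tb(1) by simp
    moreover have "\<forall>x'. (x', y) \<in> Au E r (Fu u) u \<longrightarrow> x' = x"
    proof (intro allI impI)
      fix x' assume "(x', y) \<in> Au E r (Fu u) u"
      then have "(x', y) \<in> Au E r S {t, b}" using tb(1) by (simp add: S_def)
      then show "x' = x" using T.Au_uniq[OF tb(3,2) D_def Sl pu(1,2)] xy' pu(3) by metis
    qed
    moreover have "x \<in> F" "y \<in> F" using h SF[OF u] by (auto simp: S_def)
    ultimately show "T.dep (T.mv x) < T.dep (T.mv y) \<and> T.pe (T.mv y) \<in> lpath E u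
      \<and> (\<forall>x'. (x', y) \<in> Au E r (Fu u) u \<longrightarrow> x' = x) \<and> x \<in> F \<and> y \<in> F" using s by blast
  qed
  have fin: "finite (dep_arcs E r U Fu)"
  proof (rule finite_subset[of _ "U \<times> F \<times> F"])
    show "dep_arcs E r U Fu \<subseteq> U \<times> F \<times> F"
    proof
      fix p assume "p \<in> dep_arcs E r U Fu"
      then obtain u x y where p: "p = (u, x, y)" "u \<in> U" "(x, y) \<in> Au E r (Fu u) u"
        unfolding dep_arcs_def by blast
      then have "x \<in> F" "y \<in> F" using key[OF p(2,3)] by blast+
      then show "p \<in> U \<times> F \<times> F" using p by blast
    qed
    show "finite (U \<times> F \<times> F)" using finU finF by simp
  qed
  have acyc: "acyclic {(x, y). \<exists>i. (i, x, y) \<in> dep_arcs E r U Fu}"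
  proof (rule acyclic_subset[OF wf_acyclic[OF wf_measure[of "\<lambda>l. T.dep (T.mv l)"]]])
    show "{(x, y). \<exists>i. (i, x, y) \<in> dep_arcs E r U Fu} \<subseteq> measure (\<lambda>l. T.dep (T.mv l))"
    proof
      fix p assume "p \<in> {(x, y). \<exists>i. (i, x, y) \<in> dep_arcs E r U Fu}"
      then obtain u x y where p: "p = (x, y)" "u \<in> U" "(x, y) \<in> Au E r (Fu u) u"
        unfolding dep_arcs_def by blast
      then have "T.dep (T.mv x) < T.dep (T.mv y)" using key[OF p(2,3)] by blast
      then show "p \<in> measure (\<lambda>l. T.dep (T.mv l))" using p(1) by simp
    qed
  qed
  have indeg: "\<forall>y\<in>F. card {(i, x). (i, x, y) \<in> dep_arcs E r U Fu} \<le> 1"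
  proof
    fix y assume "y \<in> F"
    let ?X = "{(i, x). (i, x, y) \<in> dep_arcs E r U Fu}"
    have "\<forall>p\<in>?X. \<forall>q\<in>?X. p = q"
    proof (intro ballI)
      fix p q assume p: "p \<in> ?X" and q: "q \<in> ?X"
      obtain u x where pp: "p = (u, x)" "u \<in> U" "(x, y) \<in> Au E r (Fu u) u"
        using p by (auto simp: dep_arcs_def)
      obtain u' x' where qq: "q = (u', x')" "u' \<in> U" "(x', y) \<in> Au E r (Fu u') u'"
        using q by (auto simp: dep_arcs_def)
      have "u = u'"
      proof (rule ccontr)
        assume "u \<noteq> u'"
        then have "lpath E u \<inter> lpath E u' = {}" using Udisj pp(2) qq(2) by blast
        moreover have "T.pe (T.mv y) \<in> lpath E u" using key[OF pp(2,3)] by blast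
        moreover have "T.pe (T.mv y) \<in> lpath E u'" using key[OF qq(2,3)] by blast
        ultimately show False by blast
      qed
      then have "x' = x" using key[OF pp(2,3)] qq(3) by blast
      then show "p = q" using pp(1) qq(1) \<open>u = u'\<close> by simp
    qed
    then show "card ?X \<le> 1"
      by (cases "finite ?X") (auto simp: card_le_Suc0_iff_eq)
  qed
  show ?thesis unfolding is_branching_def using fin acyc indeg by blast
qed

end
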